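(* Let $G$ be a graph of order $n\ge1$. Then $\operatorname{zir}(G)=1$ if and only if $G\cong P_n$ or $G\cong K_{1,n-1}$.
   Context: $P_n$ is the path on $n$ vertices, $K_{1,n-1}$ the star. A nonempty $F\subseteq V(G)$ is a fort if every $v\notin F$ has $|N(v)\cap F|\ne1$. A private fort of $x\in S$ relative to $S$ is a fort $F$ with $S\cap F=\{x\}$; $S$ is a ZIr-set if every element of $S$ has a private fort. $\operatorname{zir}(G)$ is the minimum cardinality of an inclusion-maximal ZIr-set. *)

theory Defs
  imports Main
begin

definition graph :: "'a set \<Rightarrow> ('a \<Rightarrow> 'a \<Rightarrow> bool) \<Rightarrow> bool" where
  "graph V E \<longleftrightarrow> finite V \<and> (\<forall>u v. E u v \<longrightarrow> u \<in> V \<and> v \<in> V)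
     \<and> (\<forall>u v. E u v \<longrightarrow> E v u) \<and> (\<forall>u. \<not> E u u)"

definition nbhd :: "'a set \<Rightarrow> ('a \<Rightarrow> 'a \<Rightarrow> bool) \<Rightarrow> 'a \<Rightarrow> 'a set" where
  "nbhd V E v = {u \<in> V. E v u}"

definition is_fort :: "'a set \<Rightarrow> ('a \<Rightarrow> 'a \<Rightarrow> bool) \<Rightarrow> 'a set \<Rightarrow> bool" where
  "is_fort V E F \<longleftrightarrow> F \<noteq> {} \<and> F \<subseteq> V \<and>
     (\<forall>v \<in> V - F. card (nbhd V E v \<inter> F) \<noteq> 1)"

definition private_fort :: "'a set \<Rightarrow> ('a \<Rightarrow> 'a \<Rightarrow> bool) \<Rightarrow> 'a set \<Rightarrow> 'a \<Rightarrow> 'a set \<Rightarrow> bool" where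
  "private_fort V E S x F \<longleftrightarrow> is_fort V E F \<and> S \<inter> F = {x}"

definition ZIr_set :: "'a set \<Rightarrow> ('a \<Rightarrow> 'a \<Rightarrow> bool) \<Rightarrow> 'a set \<Rightarrow> bool" where
  "ZIr_set V E S \<longleftrightarrow> S \<subseteq> V \<and> (\<forall>x \<in> S. \<exists>F. private_fort V E S x F)"

definition maximal_ZIr_set :: "'a set \<Rightarrow> ('a \<Rightarrow> 'a \<Rightarrow> bool) \<Rightarrow> 'a set \<Rightarrow> bool" where
  "maximal_ZIr_set V E S \<longleftrightarrow> ZIr_set V E S \<and> (\<forall>T. ZIr_set V E T \<and> S \<subseteq> T \<longrightarrow> T = S)"

definition zir :: "'a set \<Rightarrow> ('a \<Rightarrow> 'a \<Rightarrow> bool) \<Rightarrow> nat" where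
  "zir V E = Min (card ` {S. maximal_ZIr_set V E S})"

definition graph_iso :: "'a set \<Rightarrow> ('a \<Rightarrow> 'a \<Rightarrow> bool) \<Rightarrow> 'b set \<Rightarrow> ('b \<Rightarrow> 'b \<Rightarrow> bool) \<Rightarrow> bool" where
  "graph_iso V E W E' \<longleftrightarrow> (\<exists>f. bij_betw f V W \<and> (\<forall>u \<in> V. \<forall>v \<in> V. E u v \<longleftrightarrow> E' (f u) (f v)))"

definition path_edge :: "nat \<Rightarrow> nat \<Rightarrow> nat \<Rightarrow> bool" where
  "path_edge n i j \<longleftrightarrow> i < n \<and> j < n \<and> (j = Suc i \<or> i = Suc j)"

definition star_edge :: "nat \<Rightarrow> nat \<Rightarrow> nat \<Rightarrow> bool" where
  "star_edge n i j \<longleftrightarrow> i < n \<and> j < n \<and> i \<noteq> j \<and> (i = 0 \<or> j = 0)"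

end

theory Submission
  imports Defs
begin

lemma fort_V: "V \<noteq> {} \<Longrightarrow> is_fort V E V"
  by (auto simp: is_fort_def)

lemma nbhd_sub: "nbhd V E v \<subseteq> V" by (auto simp: nbhd_def)

lemma fort_minus:
  assumes "S \<subseteq> V" "V - S \<noteq> {}" "\<forall>v\<in>S. card (nbhd V E v - S) \<noteq> 1"
  shows "is_fort V E (V - S)"
proof -
  have "\<And>v. nbhd V E v \<inter> (V - S) = nbhd V E v - S" using nbhd_sub[of V E] by blast
  then show ?thesis using assms by (auto simp: is_fort_def)
qed

lemma fort_comp:
  assumes "S \<subseteq> V" "S \<noteq> {}" "\<forall>v\<in>V-S. \<forall>s\<in>S. \<not> E v s"
  shows "is_fort V E S"
proof -
  have "\<And>v. v \<in> V - S \<Longrightarrow> nbhd V E v \<inter> S = {}" using assms by (auto simp: nbhd_def)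
  then show ?thesis using assms by (auto simp: is_fort_def)
qed

lemma max_pair:
  assumes "maximal_ZIr_set V E {x}" "y \<in> V" "y \<noteq> x"
    "is_fort V E A" "x \<in> A" "y \<notin> A" "is_fort V E B" "y \<in> B" "x \<notin> B"
  shows False
proof -
  have "x \<in> V" using assms(1) by (auto simp: maximal_ZIr_set_def ZIr_set_def)
  have "{x,y} \<inter> A = {x}" "{x,y} \<inter> B = {y}" using assms by auto
  then have "ZIr_set V E {x, y}"
    unfolding ZIr_set_def private_fort_def using assms(2,4,7) \<open>x \<in> V\<close> by auto
  then have "{x,y} = {x}" using assms(1) unfolding maximal_ZIr_set_def by blast
  then show False using assms(3) by auto
qed

lemma all_forts_max:
  assumes "x \<in> V" "\<forall>F. is_fort V E F \<longrightarrow> x \<in> F"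
  shows "maximal_ZIr_set V E {x}"
proof -
  have "is_fort V E V" using assms(1) fort_V[of V E] by blast
  then have "ZIr_set V E {x}" using assms(1) unfolding ZIr_set_def private_fort_def
    by (intro conjI ballI exI[of _ V]) auto
  moreover have "T = {x}" if T1: "ZIr_set V E T" and T2: "{x} \<subseteq> T" for T
  proof (rule ccontr)
    assume "T \<noteq> {x}"
    then obtain y where "y \<in> T" "y \<noteq> x" using T2 by blast
    then obtain F where F1: "is_fort V E F" and F2: "T \<inter> F = {y}" using T1
      unfolding ZIr_set_def private_fort_def by blast
    have "x \<in> F" using assms(2) F1 by blast
    moreover have "x \<in> T" using T2 by simp
    ultimately have "x \<in> T \<inter> F" by simp
    then show False using F2 \<open>y \<noteq> x\<close> by simp
  qed
  ultimately show ?thesis unfolding maximal_ZIr_set_def by blast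
qed

lemma center_max:
  assumes "x \<in> V" "\<forall>F. is_fort V E F \<longrightarrow> x \<in> F \<longrightarrow> F = V"
  shows "maximal_ZIr_set V E {x}"
proof -
  have "is_fort V E V" using assms(1) fort_V[of V E] by blast
  then have "ZIr_set V E {x}" using assms(1) unfolding ZIr_set_def private_fort_def
    by (intro conjI ballI exI[of _ V]) auto
  moreover have "T = {x}" if T1: "ZIr_set V E T" and T2: "{x} \<subseteq> T" for T
  proof -
    obtain F where "is_fort V E F" "T \<inter> F = {x}" using T1 T2
      unfolding ZIr_set_def private_fort_def by blast
    moreover have "T \<subseteq> V" using T1 unfolding ZIr_set_def by blast
    ultimately have "F = V" "T \<inter> F = {x}" "T \<subseteq> V" using assms(2) by blast+
    then show ?thesis by (simp add: Int_absorb2)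
  qed
  ultimately show ?thesis unfolding maximal_ZIr_set_def by blast
qed


lemma graph_sym: "graph V E \<Longrightarrow> E u v \<Longrightarrow> E v u" by (auto simp: graph_def)
lemma graph_irr: "graph V E \<Longrightarrow> \<not> E u u" by (auto simp: graph_def)
lemma graph_in: "graph V E \<Longrightarrow> E u v \<Longrightarrow> u \<in> V \<and> v \<in> V" by (auto simp: graph_def)

lemma deg_not1_fort:
  assumes "graph V E" "x \<in> V" "card (nbhd V E x) \<noteq> 1" "V - {x} \<noteq> {}"
  shows "is_fort V E (V - {x})"
proof -
  have "x \<notin> nbhd V E x" using graph_irr[OF assms(1)] by (auto simp: nbhd_def)
  then have "nbhd V E x - {x} = nbhd V E x" by simp
  then show ?thesis using assms by (intro fort_minus) auto
qed

lemma pathL: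
  "graph V E \<Longrightarrow> card V = n \<Longrightarrow> x \<in> V \<Longrightarrow> (\<forall>F. is_fort V E F \<longrightarrow> x \<in> F) \<Longrightarrow>
   \<exists>f. bij_betw f V {0..<n} \<and> (\<forall>u\<in>V. \<forall>v\<in>V. E u v \<longleftrightarrow> path_edge n (f u) (f v)) \<and> f x = n - 1"
proof (induction n arbitrary: V E x)
  case 0
  then have "finite V" by (simp add: graph_def)
  then show ?case using 0 by auto
next
  case (Suc k)
  have finV: "finite V" using Suc.prems by (simp add: graph_def)
  show ?case
  proof (cases "k = 0")
    case True
    then have "V = {x}" using Suc.prems finV by (metis One_nat_def card_1_singletonE singletonD)
    moreover have "bij_betw (\<lambda>_. 0::nat) {x} {0..<1}" by (simp add: bij_betw_def)
    ultimately show ?thesis using True graph_irr[OF Suc.prems(1)]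
      by (intro exI[of _ "\<lambda>_. 0"]) (auto simp: path_edge_def)
  next
    case False
    have ne: "V - {x} \<noteq> {}"
    proof
      assume "V - {x} = {}"
      then have "V = {x}" using Suc.prems(3) by blast
      then show False using Suc.prems(2) False by simp
    qed
    have "card (nbhd V E x) = 1"
    proof (rule ccontr)
      assume "card (nbhd V E x) \<noteq> 1"
      then have "is_fort V E (V - {x})" by (rule deg_not1_fort[OF Suc.prems(1,3) _ ne])
      then show False using Suc.prems(4) by blast
    qed
    then obtain w where w: "nbhd V E x = {w}" by (rule card_1_singletonE)
    have Exw: "\<And>v. v \<in> V \<Longrightarrow> E x v \<longleftrightarrow> v = w" using w by (auto simp: nbhd_def)
    have wV: "w \<in> V" and wx: "w \<noteq> x" using w graph_irr[OF Suc.prems(1)] by (auto simp: nbhd_def)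
    define V' where "V' = V - {x}"
    define E' where "E' = (\<lambda>u v. E u v \<and> u \<noteq> x \<and> v \<noteq> x)"
    have g': "graph V' E'" using Suc.prems(1) unfolding graph_def V'_def E'_def by (auto simp: finV)
    have c': "card V' = k" using Suc.prems(2,3) finV by (simp add: V'_def)
    have w': "w \<in> V'" using wV wx by (simp add: V'_def)
    have nb': "\<And>v. v \<in> V' \<Longrightarrow> nbhd V' E' v = nbhd V E v - {x}"
      by (auto simp: nbhd_def V'_def E'_def)
    have forts': "\<forall>F. is_fort V' E' F \<longrightarrow> w \<in> F"
    proof (intro allI impI)
      fix F assume F: "is_fort V' E' F"
      show "w \<in> F"
      proof (rule ccontr)
        assume wF: "w \<notin> F"
        have FV: "F \<subseteq> V'" "F \<noteq> {}" using F by (auto simp: is_fort_def)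
        have "is_fort V E F"
          unfolding is_fort_def
        proof (intro conjI ballI)
          show "F \<noteq> {}" using FV by simp
          show "F \<subseteq> V" using FV by (auto simp: V'_def)
          fix v assume v: "v \<in> V - F"
          show "card (nbhd V E v \<inter> F) \<noteq> 1"
          proof (cases "v = x")
            case True
            then have "nbhd V E v \<inter> F = {}" using w wF by auto
            then show ?thesis by simp
          next
            case False
            then have "v \<in> V' - F" using v by (auto simp: V'_def)
            then have "card (nbhd V' E' v \<inter> F) \<noteq> 1" using F by (auto simp: is_fort_def)
            moreover have "nbhd V' E' v \<inter> F = nbhd V E v \<inter> F"
              using nb' \<open>v \<in> V' - F\<close> FV(1) by (auto simp: V'_def)
            ultimately show ?thesis by simp
          qed
        qed
        then have "x \<in> F" using Suc.prems(4) by blast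
        then show False using FV(1) by (auto simp: V'_def)
      qed
    qed
    obtain g where gb: "bij_betw g V' {0..<k}"
      and ge: "\<forall>u\<in>V'. \<forall>v\<in>V'. E' u v \<longleftrightarrow> path_edge k (g u) (g v)"
      and gw: "g w = k - 1"
      using Suc.IH[OF g' c' w' forts'] by blast
    define f where "f = g(x := k)"
    have VV: "V = insert x V'" using Suc.prems(3) by (auto simp: V'_def)
    have xV': "x \<notin> V'" by (simp add: V'_def)
    have fV': "\<And>v. v \<in> V' \<Longrightarrow> f v = g v" using xV' by (auto simp: f_def)
    have glt: "\<And>v. v \<in> V' \<Longrightarrow> g v < k" using gb by (auto simp: bij_betw_def)
    have ginj: "inj_on g V'" using gb by (auto simp: bij_betw_def)
    have fb: "bij_betw f V {0..<Suc k}"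
      unfolding bij_betw_def
    proof
      show "inj_on f V" unfolding VV inj_on_def
        using fV' glt ginj xV' by (auto simp: f_def inj_on_def)
      have "f ` V' = g ` V'" using fV' by (rule image_cong[OF refl])
      moreover have "f x = k" by (simp add: f_def)
      ultimately have "f ` V = insert k (g ` V')" unfolding VV by simp
      also have "\<dots> = {0..<Suc k}" using gb by (auto simp: bij_betw_def)
      finally show "f ` V = {0..<Suc k}" .
    qed
    have fe: "\<forall>u\<in>V. \<forall>v\<in>V. E u v \<longleftrightarrow> path_edge (Suc k) (f u) (f v)"
    proof (intro ballI)
      fix u v assume u: "u \<in> V" and v: "v \<in> V"
      show "E u v \<longleftrightarrow> path_edge (Suc k) (f u) (f v)"
      proof (cases "u = x"; cases "v = x")
        assume "u = x" "v = x"
        then show ?thesis using graph_irr[OF Suc.prems(1)] by (auto simp: f_def path_edge_def)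
      next
        assume ux: "u = x" and vx: "v \<noteq> x"
        then have vV': "v \<in> V'" using v by (simp add: V'_def)
        have "E u v \<longleftrightarrow> v = w" using Exw ux v by simp
        also have "\<dots> \<longleftrightarrow> g v = k - 1" using ginj gw vV' w' by (metis inj_on_eq_iff)
        also have "\<dots> \<longleftrightarrow> path_edge (Suc k) (f u) (f v)"
          using glt[OF vV'] fV'[OF vV'] ux by (auto simp: f_def path_edge_def)
        finally show ?thesis .
      next
        assume ux: "u \<noteq> x" and vx: "v = x"
        then have uV': "u \<in> V'" using u by (simp add: V'_def)
        have "E u v \<longleftrightarrow> E v u" using graph_sym[OF Suc.prems(1)] by blast
        also have "\<dots> \<longleftrightarrow> u = w" using Exw vx u by simp
        also have "\<dots> \<longleftrightarrow> g u = k - 1" using ginj gw uV' w' by (metis inj_on_eq_iff)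
        also have "\<dots> \<longleftrightarrow> path_edge (Suc k) (f u) (f v)"
          using glt[OF uV'] fV'[OF uV'] vx by (auto simp: f_def path_edge_def)
        finally show ?thesis .
      next
        assume ux: "u \<noteq> x" and vx: "v \<noteq> x"
        then have uV': "u \<in> V'" and vV': "v \<in> V'" using u v by (auto simp: V'_def)
        have "E u v \<longleftrightarrow> E' u v" using ux vx by (simp add: E'_def)
        also have "\<dots> \<longleftrightarrow> path_edge k (g u) (g v)" using ge uV' vV' by blast
        also have "\<dots> \<longleftrightarrow> path_edge (Suc k) (f u) (f v)"
          using glt[OF uV'] glt[OF vV'] fV'[OF uV'] fV'[OF vV'] by (auto simp: path_edge_def)
        finally show ?thesis .
      qed
    qed
    have "f x = Suc k - 1" by (simp add: f_def)
    then show ?thesis using fb fe by blast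
  qed
qed


lemma path_forts:
  assumes fb: "bij_betw f V {0..<n}" and fe: "\<forall>u\<in>V. \<forall>v\<in>V. E u v \<longleftrightarrow> path_edge n (f u) (f v)"
    and x: "x \<in> V" "f x = 0" and F: "is_fort V E F"
  shows "x \<in> F"
proof (rule ccontr)
  assume xF: "x \<notin> F"
  have FV: "F \<subseteq> V" "F \<noteq> {}" using F by (auto simp: is_fort_def)
  have finV: "finite V" using fb bij_betw_finite by blast
  then have finF: "finite F" using FV finite_subset by blast
  have inj: "inj_on f V" and img: "f ` V = {0..<n}" using fb by (auto simp: bij_betw_def)
  define m where "m = Min (f ` F)"
  have "m \<in> f ` F" unfolding m_def using finF FV by (intro Min_in) auto
  then obtain v where v: "v \<in> F" "f v = m" by blast
  have mle: "\<And>z. z \<in> F \<Longrightarrow> m \<le> f z" unfolding m_def using finF by (intro Min_le) auto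
  have vV: "v \<in> V" using v FV by blast
  have "m \<noteq> 0"
  proof
    assume "m = 0"
    then have "v = x" using inj vV x v by (metis inj_on_eq_iff)
    then show False using xF v by simp
  qed
  have mn: "m < n" using vV img v by auto
  then have "m - 1 \<in> f ` V" using img by auto
  then obtain u where u: "u \<in> V" "f u = m - 1" by (metis imageE)
  have uF: "u \<notin> F" using mle[of u] u \<open>m \<noteq> 0\<close> by fastforce
  have "nbhd V E u \<inter> F = {v}"
  proof (intro equalityI subsetI)
    fix z assume z: "z \<in> nbhd V E u \<inter> F"
    then have zV: "z \<in> V" and Euz: "E u z" and zF: "z \<in> F" by (auto simp: nbhd_def)
    have "path_edge n (m - 1) (f z)" using fe u zV Euz by auto
    moreover have "m \<le> f z" using mle zF by blast
    ultimately have "f z = m" using \<open>m \<noteq> 0\<close> by (auto simp: path_edge_def)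
    then show "z \<in> {v}" using inj zV vV v by (metis inj_on_eq_iff singletonI)
  next
    fix z assume "z \<in> {v}"
    then have zv: "z = v" by simp
    have "path_edge n (f u) (f v)" using u v mn \<open>m \<noteq> 0\<close> by (auto simp: path_edge_def)
    then have "E u v" using fe u vV by blast
    then show "z \<in> nbhd V E u \<inter> F" using zv vV v by (auto simp: nbhd_def)
  qed
  moreover have "u \<in> V - F" using u uF by blast
  ultimately show False using F unfolding is_fort_def by (metis is_singleton_altdef is_singleton_def)
qed

lemma star_forts:
  assumes fb: "bij_betw f V {0..<n}" and fe: "\<forall>u\<in>V. \<forall>v\<in>V. E u v \<longleftrightarrow> star_edge n (f u) (f v)"
    and c: "c \<in> V" "f c = 0" and F: "is_fort V E F" and cF: "c \<in> F"
  shows "F = V"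
proof (rule ccontr)
  assume "F \<noteq> V"
  moreover have FV: "F \<subseteq> V" using F by (auto simp: is_fort_def)
  ultimately obtain v where v: "v \<in> V" "v \<notin> F" by blast
  have inj: "inj_on f V" and img: "f ` V = {0..<n}" using fb by (auto simp: bij_betw_def)
  have vc: "v \<noteq> c" using v cF by blast
  then have fv: "f v \<noteq> 0" using inj v c by (metis inj_on_eq_iff)
  have ltn: "\<And>z. z \<in> V \<Longrightarrow> f z < n" using img by auto
  have "nbhd V E v \<inter> F = {c}"
  proof (intro equalityI subsetI)
    fix z assume z: "z \<in> nbhd V E v \<inter> F"
    then have zV: "z \<in> V" and Evz: "E v z" by (auto simp: nbhd_def)
    have "star_edge n (f v) (f z)" using fe v zV Evz by auto
    then have "f z = 0" using fv by (auto simp: star_edge_def)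
    then show "z \<in> {c}" using inj zV c by (metis inj_on_eq_iff singletonI)
  next
    fix z assume "z \<in> {c}"
    then have zc: "z = c" by simp
    have "star_edge n (f v) (f c)" using fv c ltn[OF v(1)] ltn[OF c(1)] by (auto simp: star_edge_def)
    then have "E v c" using fe v c by blast
    then show "z \<in> nbhd V E v \<inter> F" using zc c cF by (auto simp: nbhd_def)
  qed
  moreover have "v \<in> V - F" using v by blast
  ultimately show False using F unfolding is_fort_def by (metis is_singleton_altdef is_singleton_def)
qed

lemma zir_one:
  assumes g: "graph V E" and ne: "V \<noteq> {}"
  shows "zir V E = 1 \<longleftrightarrow> (\<exists>x. maximal_ZIr_set V E {x})"
proof -
  have finV: "finite V" using g by (simp add: graph_def)
  define M where "M = {S. maximal_ZIr_set V E S}"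
  have MV: "M \<subseteq> Pow V" by (auto simp: M_def maximal_ZIr_set_def ZIr_set_def)
  have finM: "finite (card ` M)" using MV finV by (meson finite_Pow_iff finite_imageI finite_subset)
  have fortV: "is_fort V E V" using ne by (rule fort_V)
  have single: "\<And>v. v \<in> V \<Longrightarrow> ZIr_set V E {v}"
    unfolding ZIr_set_def private_fort_def using fortV by (intro conjI ballI exI[of _ V]) auto
  have pos: "\<And>S. S \<in> M \<Longrightarrow> 1 \<le> card S"
  proof -
    fix S assume S: "S \<in> M"
    have "S \<noteq> {}"
    proof
      assume "S = {}"
      obtain v where "v \<in> V" using ne by blast
      then have "{v} = S" using S single unfolding M_def maximal_ZIr_set_def
        using \<open>S = {}\<close> by blast
      then show False using \<open>S = {}\<close> by simp
    qed
    moreover have "finite S" using S MV finV finite_subset by blast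
    ultimately show "1 \<le> card S" by (simp add: Suc_le_eq card_gt_0_iff)
  qed
  define Z where "Z = {S. ZIr_set V E S}"
  have "Z \<subseteq> Pow V" by (auto simp: Z_def ZIr_set_def)
  then have finZ: "finite Z" using finV by (meson finite_Pow_iff finite_subset)
  have "{} \<in> Z" by (simp add: Z_def ZIr_set_def)
  then have "Max (card ` Z) \<in> card ` Z" using finZ by (intro Max_in) auto
  then obtain S where SZ: "S \<in> Z" and Smax: "card S = Max (card ` Z)" by auto
  have "maximal_ZIr_set V E S"
    unfolding maximal_ZIr_set_def
  proof (intro conjI allI impI)
    show "ZIr_set V E S" using SZ by (simp add: Z_def)
    fix T assume T: "ZIr_set V E T \<and> S \<subseteq> T"
    then have "card T \<le> card S" using Smax finZ by (simp add: Z_def)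
    moreover have "finite T" using T finV finite_subset by (auto simp: ZIr_set_def)
    ultimately show "T = S" using T card_subset_eq by (metis antisym card_mono)
  qed
  then have Mne: "card ` M \<noteq> {}" unfolding M_def by blast
  show ?thesis
  proof
    assume "zir V E = 1"
    then have "1 \<in> card ` M" using Min_in[OF finM Mne] by (simp add: zir_def M_def)
    then obtain S where "S \<in> M" "card S = 1" by auto
    then show "\<exists>x. maximal_ZIr_set V E {x}" by (auto simp: M_def card_1_singleton_iff)
  next
    assume "\<exists>x. maximal_ZIr_set V E {x}"
    then obtain x where "{x} \<in> M" by (auto simp: M_def)
    then have "1 \<in> card ` M" by force
    moreover have "\<And>k. k \<in> card ` M \<Longrightarrow> 1 \<le> k" using pos by blast
    ultimately have "Min (card ` M) = 1" using finM by (intro Min_eqI) auto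
    then show "zir V E = 1" by (simp add: zir_def M_def)
  qed
qed


lemma star_iso:
  assumes g: "graph V E" and cV: "card V = n" and x: "x \<in> V"
    and nb: "\<forall>y\<in>V. y \<noteq> x \<longrightarrow> nbhd V E y = {x}"
  shows "graph_iso V E {0..<n} (star_edge n)"
proof -
  have finV: "finite V" using g by (simp add: graph_def)
  obtain h where hb: "bij_betw h (V - {x}) {0..<card (V - {x})}"
    using ex_bij_betw_finite_nat[of "V - {x}"] finV by blast
  have cx: "card (V - {x}) = n - 1" using cV x finV by simp
  have n1: "n \<ge> 1" using cV x finV by (metis One_nat_def Suc_leI card_gt_0_iff empty_iff)
  define f where "f = (\<lambda>v. if v = x then 0 else Suc (h v))"
  have hinj: "inj_on h (V - {x})" and himg: "h ` (V - {x}) = {0..<n - 1}"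
    using hb cx by (auto simp: bij_betw_def)
  have VV: "V = insert x (V - {x})" using x by blast
  have f0: "\<And>v. f v = 0 \<longleftrightarrow> v = x" by (simp add: f_def)
  have "f ` (V - {x}) = Suc ` h ` (V - {x})" by (auto simp: f_def)
  also have "\<dots> = Suc ` {0..<n - 1}" using himg by simp
  also have "\<dots> = {1..<n}" using n1 by (simp add: image_Suc_atLeastLessThan)
  finally have "f ` V = insert 0 {1..<n}" using VV by (metis f0 image_insert)
  also have "\<dots> = {0..<n}" using n1 by auto
  finally have fimg: "f ` V = {0..<n}" .
  have finj: "inj_on f V"
    unfolding inj_on_def
  proof (intro ballI impI)
    fix u v assume u: "u \<in> V" and v: "v \<in> V" and e: "f u = f v"
    show "u = v"
    proof (cases "u = x \<or> v = x")
      case True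
      then show ?thesis using e f0 by metis
    next
      case False
      then have "h u = h v" using e by (simp add: f_def)
      then show ?thesis using hinj u v False by (auto simp: inj_on_def)
    qed
  qed
  have flt: "\<And>v. v \<in> V \<Longrightarrow> f v < n" using fimg by auto
  have Eyx: "\<And>y v. y \<in> V \<Longrightarrow> y \<noteq> x \<Longrightarrow> v \<in> V \<Longrightarrow> E y v \<longleftrightarrow> v = x"
    using nb by (auto simp: nbhd_def)
  have fe: "\<forall>u\<in>V. \<forall>v\<in>V. E u v \<longleftrightarrow> star_edge n (f u) (f v)"
  proof (intro ballI)
    fix u v assume u: "u \<in> V" and v: "v \<in> V"
    show "E u v \<longleftrightarrow> star_edge n (f u) (f v)"
    proof (cases "u = x")
      case True
      show ?thesis
      proof (cases "v = x")
        case True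
        then show ?thesis using \<open>u = x\<close> graph_irr[OF g] by (auto simp: star_edge_def)
      next
        case False
        have "E v u" using Eyx[OF v False u] \<open>u = x\<close> by simp
        then have "E u v" using graph_sym[OF g] by blast
        moreover have "star_edge n (f u) (f v)"
          using f0[of u] f0[of v] \<open>u = x\<close> False flt u v n1 by (auto simp: star_edge_def)
        ultimately show ?thesis by simp
      qed
    next
      case False
      have "E u v \<longleftrightarrow> v = x" using Eyx[OF u False v] .
      also have "\<dots> \<longleftrightarrow> star_edge n (f u) (f v)"
        using f0[of u] f0[of v] False flt u v by (auto simp: star_edge_def)
      finally show ?thesis .
    qed
  qed
  show ?thesis unfolding graph_iso_def bij_betw_def using finj fimg fe by blast
qed


lemma nbhd_iff: "z \<in> nbhd V E y \<longleftrightarrow> z \<in> V \<and> E y z" by (simp add: nbhd_def)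

lemma max_implies_iso:
  assumes g: "graph V E" and cV: "card V = n" and mx: "maximal_ZIr_set V E {x}"
  shows "graph_iso V E {0..<n} (path_edge n) \<or> graph_iso V E {0..<n} (star_edge n)"
proof -
  have finV: "finite V" using g by (simp add: graph_def)
  have xV: "x \<in> V" using mx by (simp add: maximal_ZIr_set_def ZIr_set_def)
  have finN: "\<And>v. finite (nbhd V E v)" using finV nbhd_sub finite_subset by metis
  have sym: "\<And>u v. E u v \<Longrightarrow> E v u" using graph_sym[OF g] by blast
  have irr: "\<And>u. \<not> E u u" using graph_irr[OF g] by blast
  have inV: "\<And>u v. E u v \<Longrightarrow> u \<in> V \<and> v \<in> V" using graph_in[OF g] by blast
  show ?thesis
  proof (cases "card (nbhd V E x) = 1")
    case False
    have fx: "\<And>y. y \<in> V \<Longrightarrow> y \<noteq> x \<Longrightarrow> is_fort V E (V - {x})"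
      using deg_not1_fort[OF g xV False] by blast
    have deg1: "\<And>y. y \<in> V \<Longrightarrow> y \<noteq> x \<Longrightarrow> card (nbhd V E y) = 1"
    proof (rule ccontr)
      fix y assume y: "y \<in> V" "y \<noteq> x" and c: "card (nbhd V E y) \<noteq> 1"
      have "V - {y} \<noteq> {}" using xV y by blast
      then have "is_fort V E (V - {y})" using deg_not1_fort[OF g y(1) c] by blast
      then show False using max_pair[OF mx y(1) y(2) _ _ _ fx[OF y]] xV y by blast
    qed
    have "\<forall>y\<in>V. y \<noteq> x \<longrightarrow> nbhd V E y = {x}"
    proof (intro ballI impI)
      fix y assume y: "y \<in> V" "y \<noteq> x"
      obtain u where u: "nbhd V E y = {u}" using deg1[OF y] by (rule card_1_singletonE)
      have uV: "u \<in> V" and Eyu: "E y u" using u nbhd_iff by (metis singletonI)+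
      have uy: "u \<noteq> y" using Eyu irr by blast
      show "nbhd V E y = {x}"
      proof (rule ccontr)
        assume "nbhd V E y \<noteq> {x}"
        then have ux: "u \<noteq> x" using u by simp
        obtain u' where u': "nbhd V E u = {u'}" using deg1[OF uV ux] by (rule card_1_singletonE)
        have "y \<in> nbhd V E u" using sym[OF Eyu] y by (simp add: nbhd_iff)
        then have nu: "nbhd V E u = {y}" using u' by simp
        have A: "is_fort V E (V - {y, u})"
        proof (rule fort_minus)
          show "{y, u} \<subseteq> V" using y uV by simp
          show "V - {y, u} \<noteq> {}" using xV y ux by blast
          show "\<forall>v\<in>{y, u}. card (nbhd V E v - {y, u}) \<noteq> 1" using u nu by simp
        qed
        have B: "is_fort V E {y, u}"
        proof (rule fort_comp)
          show "{y, u} \<subseteq> V" using y uV by simp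
          show "{y, u} \<noteq> {}" by simp
          show "\<forall>v\<in>V - {y, u}. \<forall>s\<in>{y, u}. \<not> E v s"
          proof (intro ballI)
            fix v s assume v: "v \<in> V - {y, u}" and s: "s \<in> {y, u}"
            show "\<not> E v s"
            proof
              assume "E v s"
              then have "v \<in> nbhd V E s" using v sym by (simp add: nbhd_iff)
              then show False using s u nu v by auto
            qed
          qed
        qed
        show False using max_pair[OF mx y(1) y(2) A _ _ B] xV y ux by blast
      qed
    qed
    then show ?thesis using star_iso[OF g cV xV] by blast
  next
    case True
    then obtain w where w: "nbhd V E x = {w}" by (rule card_1_singletonE)
    show ?thesis
    proof (cases "\<forall>F. is_fort V E F \<longrightarrow> x \<in> F")
      case True
      then obtain f where "bij_betw f V {0..<n}" "\<forall>u\<in>V. \<forall>v\<in>V. E u v \<longleftrightarrow> path_edge n (f u) (f v)"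
        using pathL[OF g cV xV] by blast
      then show ?thesis unfolding graph_iso_def by blast
    next
      case False
      then obtain F0 where F0: "is_fort V E F0" and xF0: "x \<notin> F0" by blast
      have F0V: "F0 \<subseteq> V" "F0 \<noteq> {}" using F0 by (auto simp: is_fort_def)
      have hdeg: "\<And>z. z \<in> V \<Longrightarrow> z \<noteq> x \<Longrightarrow> card (nbhd V E z) \<noteq> 1 \<Longrightarrow> z \<notin> F0"
      proof
        fix z assume z: "z \<in> V" "z \<noteq> x" and c: "card (nbhd V E z) \<noteq> 1" and zF: "z \<in> F0"
        have "V - {z} \<noteq> {}" using xV z by blast
        then have "is_fort V E (V - {z})" using deg_not1_fort[OF g z(1) c] by blast
        then show False using max_pair[OF mx z(1) z(2) _ _ _ F0] xV z zF xF0 by blast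
      qed
      obtain y where yF: "y \<in> F0" using F0V by blast
      have yV: "y \<in> V" and yx: "y \<noteq> x" using yF F0V xF0 by auto
      have "card (nbhd V E y) = 1" using hdeg yV yx yF by blast
      then obtain u where u: "nbhd V E y = {u}" by (rule card_1_singletonE)
      have uV: "u \<in> V" and Eyu: "E y u" using u nbhd_iff by (metis singletonI)+
      have uy: "u \<noteq> y" using Eyu irr by blast
      have yinu: "y \<in> nbhd V E u" using sym[OF Eyu] yV by (simp add: nbhd_iff)
      have ux: "u \<noteq> x"
      proof
        assume "u = x"
        then have "y \<in> nbhd V E x" using yinu by simp
        then have "nbhd V E x \<inter> F0 = {y}" using w yF by auto
        moreover have "x \<in> V - F0" using xV xF0 by blast
        ultimately show False using F0 unfolding is_fort_def by (metis is_singleton_altdef is_singleton_def)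
      qed
      show ?thesis
      proof (cases "card (nbhd V E u) = 2")
        case False
        have "nbhd V E u - {y, u} = nbhd V E u - {y}" using irr by (auto simp: nbhd_iff)
        moreover have "card (nbhd V E u - {y}) = card (nbhd V E u) - 1"
          using yinu finN by simp
        moreover have "card (nbhd V E u) \<ge> 1" using yinu finN
          by (metis One_nat_def Suc_leI card_gt_0_iff empty_iff)
        ultimately have c1: "card (nbhd V E u - {y, u}) \<noteq> 1" using False by simp
        have c2: "card (nbhd V E y - {y, u}) \<noteq> 1" using u by simp
        have A: "is_fort V E (V - {y, u})"
        proof (rule fort_minus)
          show "{y, u} \<subseteq> V" using yV uV by simp
          show "V - {y, u} \<noteq> {}" using xV yx ux by blast
          show "\<forall>v\<in>{y, u}. card (nbhd V E v - {y, u}) \<noteq> 1" using c1 c2 by simp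
        qed
        show ?thesis using max_pair[OF mx yV yx A _ _ F0 yF xF0] xV ux yx by blast
      next
        case True
        then obtain a b where ab: "nbhd V E u = {a, b}" "a \<noteq> b" unfolding card_2_iff by blast
        obtain z where z: "nbhd V E u = {y, z}" "z \<noteq> y"
        proof (cases "y = a")
          case True
          then show ?thesis using ab that[of b] by simp
        next
          case False
          then have "y = b" using ab yinu by simp
          then show ?thesis using ab that[of a] by (simp add: insert_commute)
        qed
        have uF: "u \<notin> F0" using hdeg[OF uV ux] True by simp
        have zF: "z \<in> F0"
        proof (rule ccontr)
          assume "z \<notin> F0"
          then have "nbhd V E u \<inter> F0 = {y}" using z yF by auto
          moreover have "u \<in> V - F0" using uV uF by blast
          ultimately show False using F0 unfolding is_fort_def by (metis is_singleton_altdef is_singleton_def)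
        qed
        have zV: "z \<in> V" and zx: "z \<noteq> x" using zF F0V xF0 by auto
        have "card (nbhd V E z) = 1" using hdeg zV zx zF by blast
        moreover have "z \<in> nbhd V E u" using z by simp
        then have "E z u" using sym by (simp add: nbhd_iff)
        then have zu: "u \<in> nbhd V E z" using uV by (simp add: nbhd_iff)
        ultimately obtain t where "nbhd V E z = {t}" by (metis card_1_singletonE)
        then have nz: "nbhd V E z = {u}" using zu by simp
        have A: "is_fort V E (V - {y, u, z})"
        proof (rule fort_minus)
          show "{y, u, z} \<subseteq> V" using yV uV zV by simp
          show "V - {y, u, z} \<noteq> {}" using xV yx ux zx by blast
          have h: "nbhd V E y - {y, u, z} = {}" "nbhd V E u - {y, u, z} = {}"
            "nbhd V E z - {y, u, z} = {}" using u z(1) nz by auto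
          show "\<forall>v\<in>{y, u, z}. card (nbhd V E v - {y, u, z}) \<noteq> 1"
          proof
            fix v assume "v \<in> {y, u, z}"
            then have "nbhd V E v - {y, u, z} = {}" using h by blast
            then show "card (nbhd V E v - {y, u, z}) \<noteq> 1" by (simp only: card.empty)
          qed
        qed
        show ?thesis using max_pair[OF mx yV yx A _ _ F0 yF xF0] xV ux yx zx by blast
      qed
    qed
  qed
qed

theorem theorem5p8:
  fixes V :: "'a set" and E :: "'a \<Rightarrow> 'a \<Rightarrow> bool" and n :: nat
  assumes "graph V E" and "card V = n" and "n \<ge> 1"
  shows "zir V E = 1 \<longleftrightarrow>
           graph_iso V E {0..<n} (path_edge n) \<or> graph_iso V E {0..<n} (star_edge n)"
proof -
  have ne: "V \<noteq> {}" using assms(2,3) by auto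
  show ?thesis
  proof
    assume "zir V E = 1"
    then obtain x where "maximal_ZIr_set V E {x}" using zir_one[OF assms(1) ne] by blast
    then show "graph_iso V E {0..<n} (path_edge n) \<or> graph_iso V E {0..<n} (star_edge n)"
      using max_implies_iso[OF assms(1,2)] by blast
  next
    assume iso: "graph_iso V E {0..<n} (path_edge n) \<or> graph_iso V E {0..<n} (star_edge n)"
    have "\<exists>x. maximal_ZIr_set V E {x}"
    proof (cases "graph_iso V E {0..<n} (path_edge n)")
      case True
      then obtain f where fb: "bij_betw f V {0..<n}"
        and fe: "\<forall>u\<in>V. \<forall>v\<in>V. E u v \<longleftrightarrow> path_edge n (f u) (f v)" by (auto simp: graph_iso_def)
      have "0 \<in> f ` V" using fb assms(3) by (auto simp: bij_betw_def)
      then obtain x where x: "x \<in> V" "f x = 0" by (metis imageE)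
      have "\<forall>F. is_fort V E F \<longrightarrow> x \<in> F" using path_forts[OF fb fe x] by blast
      then show ?thesis using all_forts_max[OF x(1)] by blast
    next
      case False
      then obtain f where fb: "bij_betw f V {0..<n}"
        and fe: "\<forall>u\<in>V. \<forall>v\<in>V. E u v \<longleftrightarrow> star_edge n (f u) (f v)"
        using iso by (auto simp: graph_iso_def)
      have "0 \<in> f ` V" using fb assms(3) by (auto simp: bij_betw_def)
      then obtain x where x: "x \<in> V" "f x = 0" by (metis imageE)
      have "\<forall>F. is_fort V E F \<longrightarrow> x \<in> F \<longrightarrow> F = V" using star_forts[OF fb fe x] by blast
      then show ?thesis using center_max[OF x(1)] by blast
    qed
    then show "zir V E = 1" using zir_one[OF assms(1) ne] by blast
  qed
qed

end
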